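(* Let $H$ be a real Hilbert space, $\mathcal{I}$ a finite index set, $J,g_i:H\to\mathbb{R}$ ($i\in\mathcal{I}$) $\mathcal{C}^1$ functions, $\Omega=\{u\in H: g_i(u)\le 0\ \forall i\in\mathcal{I}\}$, and assume that for every $u\in\Omega$ with $I_A(u)\ne\emptyset$ the vectors $\{g_i'(u): i\in I_A(u)\}$ are linearly independent. Let $u\in\Omega$ and let $d\in H$ satisfy $\langle d, g_i'(u)\rangle=0$ for all $i\in I_W(u)$. Write the orthogonal decomposition $-J'(u)=d(u)+w$ with $d(u)\in\operatorname{span}\{d\}$ and $w\in d^\perp=\{v\in H:\langle v,d\rangle=0\}$. Then $$\langle J'(u), d_W(u)\rangle\le\langle J'(u), d(u)\rangle\le 0\quad\text{and}\quad \|d(u)\|\le\|d_W(u)\|,$$ where equality holds in the first inequality, or in the third inequality $\|d(u)\|\le\|d_W(u)\|$, if and only if $d(u)=d_W(u)$, and equality holds in the second inequality if and only if $d(u)=0$.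
   Context: $J'(u)$, $g_i'(u)$ denote gradients in $H$; $\mathbb{P}_C$ is the metric projection onto a closed convex set $C$. For $u\in\Omega$: $I_A(u)=\{i\in\mathcal{I}: g_i(u)=0\}$; $C_A(u)=\{\sum_{i\in I_A(u)}a_ig_i'(u): a_i\ge0\}$ ($=\{0\}$ if empty); $d_A(u)=-J'(u)-\mathbb{P}_{C_A(u)}(-J'(u))$; $I_W(u)=\{i\in I_A(u): \langle g_i'(u), d_A(u)\rangle=0\}$; $C_W(u)=\{\sum_{i\in I_W(u)}a_ig_i'(u): a_i\ge 0\}$ ($=\{0\}$ if empty); $d_W(u)=-J'(u)-\mathbb{P}_{C_W(u)}(-J'(u))$. *)

theory Defs
  imports "HOL-Analysis.Analysis"
begin

text \<open>Metric projection onto a set C (meaningful for closed convex C in a Hilbert space).\<close>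
definition metric_proj :: "'a::real_inner set \<Rightarrow> 'a \<Rightarrow> 'a" where
  "metric_proj C x = (SOME p. p \<in> C \<and> (\<forall>c\<in>C. dist x p \<le> dist x c))"

definition gen_cone :: "'i set \<Rightarrow> ('i \<Rightarrow> 'a::real_vector) \<Rightarrow> 'a set" where
  "gen_cone K v = {(\<Sum>i\<in>K. a i *\<^sub>R v i) | a. \<forall>i\<in>K. a i \<ge> 0}"

definition feas :: "'i set \<Rightarrow> ('i \<Rightarrow> 'a \<Rightarrow> real) \<Rightarrow> 'a set" where
  "feas I g = {u. \<forall>i\<in>I. g i u \<le> 0}"

definition IA :: "'i set \<Rightarrow> ('i \<Rightarrow> 'a \<Rightarrow> real) \<Rightarrow> 'a \<Rightarrow> 'i set" where
  "IA I g u = {i\<in>I. g i u = 0}"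

definition dA :: "'i set \<Rightarrow> ('i \<Rightarrow> 'a \<Rightarrow> real) \<Rightarrow> ('i \<Rightarrow> 'a \<Rightarrow> 'a::real_inner)
    \<Rightarrow> ('a \<Rightarrow> 'a) \<Rightarrow> 'a \<Rightarrow> 'a" where
  "dA I g g' J' u = - J' u - metric_proj (gen_cone (IA I g u) (\<lambda>i. g' i u)) (- J' u)"

definition IW :: "'i set \<Rightarrow> ('i \<Rightarrow> 'a \<Rightarrow> real) \<Rightarrow> ('i \<Rightarrow> 'a \<Rightarrow> 'a::real_inner)
    \<Rightarrow> ('a \<Rightarrow> 'a) \<Rightarrow> 'a \<Rightarrow> 'i set" where
  "IW I g g' J' u = {i \<in> IA I g u. inner (g' i u) (dA I g g' J' u) = 0}"

definition dW :: "'i set \<Rightarrow> ('i \<Rightarrow> 'a \<Rightarrow> real) \<Rightarrow> ('i \<Rightarrow> 'a \<Rightarrow> 'a::real_inner)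
    \<Rightarrow> ('a \<Rightarrow> 'a) \<Rightarrow> 'a \<Rightarrow> 'a" where
  "dW I g g' J' u = - J' u - metric_proj (gen_cone (IW I g g' J' u) (\<lambda>i. g' i u)) (- J' u)"

end

theory Submission
  imports Defs
begin

lemma compact_box:
  fixes K :: "'i set" and R :: real
  shows "compact (PiE UNIV (\<lambda>i. if i \<in> K then {-R..R} else {0::real}))"
proof -
  have "compactin (product_topology (\<lambda>i. euclidean) UNIV) (PiE UNIV (\<lambda>i. if i \<in> K then {-R..R} else {0::real}))"
    by (subst compactin_PiE) auto
  then show ?thesis by (simp add: euclidean_product_topology)
qed

lemma compact_box0:
  fixes K :: "'i set" and R :: real
  shows "compact (PiE UNIV (\<lambda>i. if i \<in> K then {0..R} else {0::real}))"
proof -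
  have "compactin (product_topology (\<lambda>i. euclidean) UNIV) (PiE UNIV (\<lambda>i. if i \<in> K then {0..R} else {0::real}))"
    by (subst compactin_PiE) auto
  then show ?thesis by (simp add: euclidean_product_topology)
qed

lemma closed_sphere_part:
  fixes K :: "'i set"
  assumes "finite K"
  shows "closed {t::'i\<Rightarrow>real. \<exists>i\<in>K. \<bar>t i\<bar> = 1}"
proof -
  have "{t::'i\<Rightarrow>real. \<exists>i\<in>K. \<bar>t i\<bar> = 1} = (\<Union>i\<in>K. {t. \<bar>t i\<bar> = 1})" by auto
  moreover have "closed {t::'i\<Rightarrow>real. \<bar>t i\<bar> = 1}" for i
    by (rule closed_Collect_eq) (auto intro: continuous_intros)
  ultimately show ?thesis using assms by (auto intro: closed_UN)
qed

lemma coercive: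
  fixes a :: "'i \<Rightarrow> 'a::real_normed_vector"
  assumes finK: "finite K"
    and ind: "\<And>t. (\<Sum>i\<in>K. t i *\<^sub>R a i) = 0 \<Longrightarrow> \<forall>i\<in>K. t i = 0"
  shows "\<exists>m>0. \<forall>t. \<forall>i\<in>K. m * \<bar>t i\<bar> \<le> norm (\<Sum>i\<in>K. t i *\<^sub>R a i)"
proof (cases "K = {}")
  case True then show ?thesis by (intro exI[of _ 1]) auto
next
  case False
  then obtain j where j: "j \<in> K" by auto
  define S where "S = PiE UNIV (\<lambda>i. if i \<in> K then {-1..1} else {0::real}) \<inter> {t. \<exists>i\<in>K. \<bar>t i\<bar> = 1}"
  have cS: "compact S" unfolding S_def
    using compact_box[of K 1] closed_sphere_part[OF finK] by auto
  have "(\<lambda>i. if i = j then 1 else 0::real) \<in> S" unfolding S_def using j by auto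
  then have neS: "S \<noteq> {}" by auto
  have cont: "continuous_on S (\<lambda>t. norm (\<Sum>i\<in>K. t i *\<^sub>R a i))"
    by (intro continuous_intros continuous_on_subset[OF continuous_on_product_coordinates]) auto
  obtain t0 where t0: "t0 \<in> S" and min: "\<And>t. t \<in> S \<Longrightarrow> norm (\<Sum>i\<in>K. t0 i *\<^sub>R a i) \<le> norm (\<Sum>i\<in>K. t i *\<^sub>R a i)"
    using continuous_attains_inf[OF cS neS cont] by auto
  define m where "m = norm (\<Sum>i\<in>K. t0 i *\<^sub>R a i)"
  have "m > 0"
  proof (rule ccontr)
    assume "\<not> m > 0"
    then have "(\<Sum>i\<in>K. t0 i *\<^sub>R a i) = 0" unfolding m_def by simp
    then have "\<forall>i\<in>K. t0 i = 0" by (rule ind)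
    with t0 show False unfolding S_def by auto
  qed
  have main: "m * \<bar>t i\<bar> \<le> norm (\<Sum>i\<in>K. t i *\<^sub>R a i)" if iK: "i \<in> K" for t i
  proof -
    define M where "M = Max ((\<lambda>i. \<bar>t i\<bar>) ` K)"
    have tiM: "\<bar>t i\<bar> \<le> M" unfolding M_def using finK iK by auto
    obtain k where k: "k \<in> K" "M = \<bar>t k\<bar>"
    proof -
      have "M \<in> (\<lambda>i. \<bar>t i\<bar>) ` K" unfolding M_def using finK False by (intro Max_in) auto
      then show ?thesis using that by auto
    qed
    show ?thesis
    proof (cases "M = 0")
      case True
      then show ?thesis using tiM by simp
    next
      case Mne: False
      then have Mpos: "M > 0" using k by auto
      define t' where "t' = (\<lambda>i. if i \<in> K then t i / M else 0)"
      have A: "t' \<in> PiE UNIV (\<lambda>i. if i \<in> K then {-1..1} else {0::real})"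
      proof -
        have "t' l \<in> (if l \<in> K then {-1..1} else {0})" for l
        proof (cases "l \<in> K")
          case True
          then have "\<bar>t l\<bar> \<le> M" unfolding M_def using finK by auto
          then show ?thesis using Mpos True by (auto simp: t'_def abs_le_iff divide_simps)
        qed (auto simp: t'_def)
        then show ?thesis by auto
      qed
      have B: "\<exists>i\<in>K. \<bar>t' i\<bar> = 1"
        using k Mpos by (intro bexI[of _ k]) (auto simp: t'_def)
      have "t' \<in> S" unfolding S_def using A B by auto
      then have "m \<le> norm (\<Sum>i\<in>K. t' i *\<^sub>R a i)" unfolding m_def by (rule min)
      also have "(\<Sum>i\<in>K. t' i *\<^sub>R a i) = (1/M) *\<^sub>R (\<Sum>i\<in>K. t i *\<^sub>R a i)"
        unfolding t'_def scaleR_sum_right by (intro sum.cong) auto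
      also have "norm \<dots> = norm (\<Sum>i\<in>K. t i *\<^sub>R a i) / M" using Mpos by simp
      finally have "m * M \<le> norm (\<Sum>i\<in>K. t i *\<^sub>R a i)" using Mpos by (simp add: field_simps)
      moreover have "m * \<bar>t i\<bar> \<le> m * M" using tiM \<open>m > 0\<close> by simp
      ultimately show ?thesis by linarith
    qed
  qed
  show ?thesis using \<open>m > 0\<close> main by blast
qed


lemma proj_exists:
  fixes a :: "'i \<Rightarrow> 'a::real_normed_vector"
  assumes finK: "finite K"
    and ind: "\<And>t. (\<Sum>i\<in>K. t i *\<^sub>R a i) = 0 \<Longrightarrow> \<forall>i\<in>K. t i = 0"
  shows "\<exists>p. p \<in> gen_cone K a \<and> (\<forall>c\<in>gen_cone K a. dist v p \<le> dist v c)"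
proof -
  obtain m where m: "m > 0" "\<And>t i. i \<in> K \<Longrightarrow> m * \<bar>t i\<bar> \<le> norm (\<Sum>i\<in>K. t i *\<^sub>R a i)"
    using coercive[OF finK ind] by blast
  define R where "R = 2 * norm v / m"
  have R0: "R \<ge> 0" unfolding R_def using m by simp
  define B where "B = PiE UNIV (\<lambda>i. if i \<in> K then {0..R} else {0::real})"
  have cB: "compact B" unfolding B_def by (rule compact_box0)
  have zB: "(\<lambda>_. 0) \<in> B" unfolding B_def using R0 by auto
  then have neB: "B \<noteq> {}" by auto
  have cont: "continuous_on B (\<lambda>t. dist v (\<Sum>i\<in>K. t i *\<^sub>R a i))"
    by (intro continuous_intros continuous_on_subset[OF continuous_on_product_coordinates]) auto
  obtain t0 where t0: "t0 \<in> B" and min: "\<And>t. t \<in> B \<Longrightarrow> dist v (\<Sum>i\<in>K. t0 i *\<^sub>R a i) \<le> dist v (\<Sum>i\<in>K. t i *\<^sub>R a i)"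
    using continuous_attains_inf[OF cB neB cont] by auto
  define p where "p = (\<Sum>i\<in>K. t0 i *\<^sub>R a i)"
  have "\<forall>i\<in>K. t0 i \<ge> 0"
  proof
    fix i assume i: "i \<in> K"
    have "t0 i \<in> (if i \<in> K then {0..R} else {0})" using t0 unfolding B_def by (auto simp: PiE_iff)
    then show "t0 i \<ge> 0" using i by simp
  qed
  then have "p \<in> gen_cone K a" unfolding p_def gen_cone_def by blast
  moreover have "dist v p \<le> dist v c" if cC: "c \<in> gen_cone K a" for c
  proof -
    obtain t where t: "c = (\<Sum>i\<in>K. t i *\<^sub>R a i)" "\<forall>i\<in>K. t i \<ge> 0"
      using cC unfolding gen_cone_def by blast
    define t' where "t' = (\<lambda>i. if i \<in> K then t i else 0)"
    have ct': "c = (\<Sum>i\<in>K. t' i *\<^sub>R a i)" unfolding t t'_def by (intro sum.cong) auto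
    show ?thesis
    proof (cases "\<forall>i\<in>K. t i \<le> R")
      case True
      then have "t' \<in> B" unfolding B_def t'_def using t by auto
      then show ?thesis using min ct' unfolding p_def by auto
    next
      case False
      then obtain i where i: "i \<in> K" "t i > R" by auto
      have "m * R < m * \<bar>t' i\<bar>" using i m(1) R0 unfolding t'_def by auto
      also have "\<dots> \<le> norm c" using m(2)[OF i(1), of t'] ct' by simp
      finally have "2 * norm v < norm c" using m(1) unfolding R_def by simp
      then have "norm v < dist v c" using norm_triangle_ineq2[of c v] by (simp add: dist_norm norm_minus_commute)
      moreover have "dist v p \<le> dist v 0" using min[OF zB] unfolding p_def by simp
      ultimately show ?thesis by simp
    qed
  qed
  ultimately show ?thesis by blast
qed

lemma cone_scale:
  assumes "p \<in> gen_cone K a" "s \<ge> 0"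
  shows "s *\<^sub>R p \<in> gen_cone K a"
proof -
  obtain t where t: "p = (\<Sum>i\<in>K. t i *\<^sub>R a i)" "\<forall>i\<in>K. t i \<ge> 0"
    using assms unfolding gen_cone_def by auto
  have "s *\<^sub>R p = (\<Sum>i\<in>K. (s * t i) *\<^sub>R a i)" unfolding t scaleR_sum_right by simp
  then show ?thesis unfolding gen_cone_def using t assms by force
qed

lemma proj_orth:
  fixes v p :: "'a::real_inner"
  assumes pC: "p \<in> gen_cone K a" and min: "\<forall>c\<in>gen_cone K a. dist v p \<le> dist v c"
  shows "inner (v - p) p = 0"
proof (rule ccontr)
  define q where "q = inner (v - p) p"
  assume "inner (v - p) p \<noteq> 0"
  then have q0: "q \<noteq> 0" unfolding q_def .
  define s where "s = q / (\<bar>q\<bar> + inner p p + 1)"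
  have den: "\<bar>q\<bar> + inner p p + 1 > 0" by (simp add: add_nonneg_pos)
  have pp0: "inner p p \<ge> 0" by simp
  have m1: "-1 < inner p p" using pp0 by linarith
  have sgt: "s > -1" unfolding s_def using den m1 by (auto simp: divide_simps abs_if)
  have "(1 + s) *\<^sub>R p \<in> gen_cone K a" using cone_scale[OF pC, of "1+s"] sgt by simp
  then have "dist v p \<le> dist v ((1 + s) *\<^sub>R p)" using min by auto
  then have "(norm (v - p))^2 \<le> (norm (v - p - s *\<^sub>R p))^2"
    by (simp add: dist_norm algebra_simps power_mono)
  also have "(norm (v - p - s *\<^sub>R p))^2 = (norm (v - p))^2 - 2 * s * q + s^2 * inner p p"
    unfolding power2_norm_eq_inner q_def by (simp add: algebra_simps inner_commute power2_eq_square)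
  finally have le: "0 \<le> s * (s * inner p p - 2 * q)" by (simp add: algebra_simps power2_eq_square)
  have pp: "inner p p \<ge> 0" by simp
  define x where "x = inner p p / (\<bar>q\<bar> + inner p p + 1)"
  have sx: "s * inner p p = q * x" unfolding s_def x_def by simp
  have x1: "x \<le> 1" unfolding x_def using den by (simp add: divide_simps)
  show False
  proof (cases "q > 0")
    case True
    then have s0: "s > 0" unfolding s_def using den by (intro divide_pos_pos) auto
    have "s * inner p p \<le> q" unfolding sx using mult_left_mono[OF x1, of q] True by simp
    then have "s * (s * inner p p - 2 * q) < 0" using s0 True by (simp add: mult_pos_neg)
    then show False using le by simp
  next
    case False
    then have qn: "q < 0" using q0 by simp
    then have s0: "s < 0" unfolding s_def using den by (intro divide_neg_pos) auto
    have "s * inner p p \<ge> q" unfolding sx using mult_left_mono_neg[OF x1, of q] qn by simp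
    then have "s * (s * inner p p - 2 * q) < 0" using s0 qn by (simp add: mult_neg_pos)
    then show False using le by simp
  qed
qed

theorem lemma7:
  fixes I :: "'i set"
    and J :: "'a::{real_inner,complete_space} \<Rightarrow> real"
    and J' :: "'a \<Rightarrow> 'a"
    and g :: "'i \<Rightarrow> 'a \<Rightarrow> real"
    and g' :: "'i \<Rightarrow> 'a \<Rightarrow> 'a"
    and u d du :: 'a
  assumes finI: "finite I"
    and J_C1: "\<forall>x. (J has_derivative (\<lambda>v. inner (J' x) v)) (at x)" "continuous_on UNIV J'"
    and g_C1: "\<forall>i\<in>I. (\<forall>x. (g i has_derivative (\<lambda>v. inner (g' i x) v)) (at x))
                        \<and> continuous_on UNIV (g' i)"
    and LICQ: "\<forall>x\<in>feas I g. IA I g x \<noteq> {} \<longrightarrow>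
                 inj_on (\<lambda>i. g' i x) (IA I g x) \<and> independent ((\<lambda>i. g' i x) ` IA I g x)"
    and u: "u \<in> feas I g"
    and d: "\<forall>i\<in>IW I g g' J' u. inner d (g' i u) = 0"
    and du_span: "du \<in> span {d}"
    and w_perp: "inner (- J' u - du) d = 0"
  shows "inner (J' u) (dW I g g' J' u) \<le> inner (J' u) du
         \<and> inner (J' u) du \<le> 0
         \<and> norm du \<le> norm (dW I g g' J' u)
         \<and> (inner (J' u) (dW I g g' J' u) = inner (J' u) du \<longleftrightarrow> du = dW I g g' J' u)
         \<and> (norm du = norm (dW I g g' J' u) \<longleftrightarrow> du = dW I g g' J' u)
         \<and> (inner (J' u) du = 0 \<longleftrightarrow> du = 0)"
proof -
  define a where "a = (\<lambda>i. g' i u)"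
  define K where "K = IW I g g' J' u"
  define v where "v = - J' u"
  define C where "C = gen_cone K a"
  have KIA: "K \<subseteq> IA I g u" unfolding K_def IW_def by auto
  have finK: "finite K" using KIA finI unfolding IA_def by (auto intro: finite_subset)
  have ind: "\<forall>i\<in>K. t i = 0" if st: "(\<Sum>i\<in>K. t i *\<^sub>R a i) = 0" for t
  proof (cases "K = {}")
    case False
    then have "IA I g u \<noteq> {}" using KIA by auto
    with LICQ u have inj: "inj_on a (IA I g u)" and indep: "independent (a ` IA I g u)"
      unfolding a_def by auto
    have injK: "inj_on a K" using inj KIA by (rule inj_on_subset)
    define c where "c = (\<lambda>w. t (the_inv_into K a w))"
    have "(\<Sum>w\<in>a ` K. c w *\<^sub>R w) = (\<Sum>i\<in>K. c (a i) *\<^sub>R a i)"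
      using injK by (simp add: sum.reindex)
    also have "\<dots> = (\<Sum>i\<in>K. t i *\<^sub>R a i)"
      unfolding c_def using injK by (intro sum.cong) (auto simp: the_inv_into_f_f)
    finally have s0: "(\<Sum>w\<in>a ` K. c w *\<^sub>R w) = 0" using st by simp
    show ?thesis
    proof
      fix i assume i: "i \<in> K"
      have "c (a i) = 0"
        using independentD[OF indep _ _ s0, of "a i"] finK KIA i by auto
      then show "t i = 0" unfolding c_def using injK i by (simp add: the_inv_into_f_f)
    qed
  qed simp
  obtain p0 where p0: "p0 \<in> C \<and> (\<forall>c\<in>C. dist v p0 \<le> dist v c)"
    using proj_exists[OF finK ind] unfolding C_def by blast
  define p where "p = metric_proj C v"
  have pp: "p \<in> C \<and> (\<forall>c\<in>C. dist v p \<le> dist v c)"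
    unfolding p_def metric_proj_def using p0 by (rule someI)
  have dWe: "dW I g g' J' u = v - p" unfolding dW_def p_def C_def K_def a_def v_def by simp
  define e where "e = v - p"
  have ep: "inner e p = 0" unfolding e_def using pp proj_orth unfolding C_def by blast
  have dp: "inner d p = 0"
  proof -
    obtain t where t: "p = (\<Sum>i\<in>K. t i *\<^sub>R a i)" using pp unfolding C_def gen_cone_def by blast
    have "inner d p = (\<Sum>i\<in>K. t i * inner d (a i))" unfolding t by (simp add: inner_sum_right)
    also have "\<dots> = 0" using d unfolding K_def a_def by simp
    finally show ?thesis .
  qed
  obtain k where k: "du = k *\<^sub>R d" using du_span by (auto simp: span_singleton)
  have vd: "inner (v - du) d = 0" using w_perp unfolding v_def .
  have vdu: "inner (v - du) du = 0" using vd k by simp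
  have edu: "inner (e - du) du = 0"
  proof -
    have "inner (e - du) d = inner (v - du) d - inner p d" unfolding e_def by (simp add: algebra_simps inner_diff_left)
    then have "inner (e - du) d = 0" using vd dp by (simp add: inner_commute)
    then show ?thesis using k by simp
  qed
  have ve: "inner v e = inner e e" using ep unfolding e_def by (simp add: algebra_simps inner_diff_left inner_diff_right inner_commute)
  have vdu2: "inner v du = inner du du" using vdu by (simp add: algebra_simps inner_diff_left)
  have pyth: "inner e e = inner du du + inner (e - du) (e - du)"
    using edu by (simp add: algebra_simps inner_diff_left inner_diff_right inner_commute)
  have J1: "inner (J' u) e = - inner e e" using ve unfolding v_def by simp
  have J2: "inner (J' u) du = - inner du du" using vdu2 unfolding v_def by simp
  have nn: "norm du \<le> norm e \<longleftrightarrow> inner du du \<le> inner e e"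
    by (simp add: norm_eq_sqrt_inner)
  have neq: "norm du = norm e \<longleftrightarrow> inner du du = inner e e"
    by (simp add: norm_eq_sqrt_inner)
  have z: "inner (e - du) (e - du) = 0 \<longleftrightarrow> du = e" by auto
  have pos: "inner (e - du) (e - du) \<ge> 0" by simp
  show ?thesis unfolding dWe e_def[symmetric]
    using J1 J2 nn neq z pos pyth by auto
qed

end
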